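(* For any trie $\mathcal{T}$, each edge of the suffix tree $\mathsf{STree}(\mathcal{T})$ contains at most one implicit node $v$ such that $\mathsf{str}(v)$ is a palindrome.
   Context: A trie $\mathcal{T}$ is a rooted tree in which each edge is labeled by a single character and the out-going edges of each node have mutually distinct labels. Path labels are read leaf-to-root: for $\mathbf{u}$ a descendant of $\mathbf{v}$, $\mathsf{str}(\mathbf{u},\mathbf{v})$ is the string of edge labels on the path from $\mathbf{u}$ up to $\mathbf{v}$. By convention the root $\mathbf{r}$ of $\mathcal{T}$ has a single child, reached by an edge labeled by a special character $\$$ occurring nowhere else in $\mathcal{T}$. For each node $\mathbf{v}$ let $\mathsf{suf}(\mathbf{v})=\mathsf{str}(\mathbf{v},\mathbf{r})$. The suffix tree $\mathsf{STree}(\mathcal{T})$ is the compacted trie (edges labeled by non-empty strings, out-going edge labels of each node beginning with distinct characters, every internal node other than the root having at least two children) whose leaves are in one-to-one correspondence with the non-root nodes $\mathbf{v}$ of $\mathcal{T}$, the leaf for $\mathbf{v}$ spelling $\mathsf{suf}(\mathbf{v})$ from the root. For a point (locus) $v$ on $\mathsf{STree}(\mathcal{T})$, $\mathsf{str}(v)$ is the string spelled from the root to $v$; loci at nodes are explicit nodes and loci strictly inside edges are implicit nodes. A palindrome is a string equal to its reversal. *)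

theory Defs
  imports Main "HOL-Library.Sublist"
begin

text \<open>A trie with node set V, root r, parent function par, and lab v the label
of the edge from v (a non-root node) to its parent.  dollar is the special
character on the single edge leaving the root.\<close>

definition trie :: "'v set \<Rightarrow> 'v \<Rightarrow> ('v \<Rightarrow> 'v) \<Rightarrow> ('v \<Rightarrow> 'a) \<Rightarrow> 'a \<Rightarrow> bool" where
  "trie V r par lab dollar \<longleftrightarrow>
     finite V \<and> r \<in> V \<and>
     (\<forall>v\<in>V - {r}. par v \<in> V \<and> (\<exists>k. (par ^^ k) v = r)) \<and>
     (\<forall>v\<in>V - {r}. \<forall>w\<in>V - {r}. par v = par w \<and> lab v = lab w \<longrightarrow> v = w) \<and>
     (\<exists>c\<in>V - {r}. par c = r \<and> lab c = dollar \<and> (\<forall>v\<in>V - {r}. par v = r \<longrightarrow> v = c)) \<and>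
     (\<forall>v\<in>V - {r}. lab v = dollar \<longrightarrow> par v = r)"

definition depth :: "'v \<Rightarrow> ('v \<Rightarrow> 'v) \<Rightarrow> 'v \<Rightarrow> nat" where
  "depth r par v = (LEAST k. (par ^^ k) v = r)"

text \<open>suf v = str(v, r): edge labels read from v up to the root.\<close>
definition suf :: "'v \<Rightarrow> ('v \<Rightarrow> 'v) \<Rightarrow> ('v \<Rightarrow> 'a) \<Rightarrow> 'v \<Rightarrow> 'a list" where
  "suf r par lab v = map (\<lambda>i. lab ((par ^^ i) v)) [0..<depth r par v]"

text \<open>The suffix tree STree(T), the compacted trie of {suf v | v non-root}.
Its loci (explicit or implicit nodes) are identified with the strings str(v)
they spell, i.e. the prefixes of the strings suf v.\<close>

definition stree_loci :: "'v set \<Rightarrow> 'v \<Rightarrow> ('v \<Rightarrow> 'v) \<Rightarrow> ('v \<Rightarrow> 'a) \<Rightarrow> 'a list set" where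
  "stree_loci V r par lab = {x. \<exists>v\<in>V - {r}. prefix x (suf r par lab v)}"

definition stree_explicit :: "'v set \<Rightarrow> 'v \<Rightarrow> ('v \<Rightarrow> 'v) \<Rightarrow> ('v \<Rightarrow> 'a) \<Rightarrow> 'a list set" where
  "stree_explicit V r par lab =
     {x \<in> stree_loci V r par lab.
        x = [] \<or> (\<exists>v\<in>V - {r}. x = suf r par lab v) \<or>
        (\<exists>c d. c \<noteq> d \<and> x @ [c] \<in> stree_loci V r par lab \<and> x @ [d] \<in> stree_loci V r par lab)}"

definition stree_implicit :: "'v set \<Rightarrow> 'v \<Rightarrow> ('v \<Rightarrow> 'v) \<Rightarrow> ('v \<Rightarrow> 'a) \<Rightarrow> 'a list set" where
  "stree_implicit V r par lab = stree_loci V r par lab - stree_explicit V r par lab"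

definition stree_edge :: "'v set \<Rightarrow> 'v \<Rightarrow> ('v \<Rightarrow> 'v) \<Rightarrow> ('v \<Rightarrow> 'a) \<Rightarrow> 'a list \<Rightarrow> 'a list \<Rightarrow> bool" where
  "stree_edge V r par lab u w \<longleftrightarrow>
     u \<in> stree_explicit V r par lab \<and> w \<in> stree_explicit V r par lab \<and> strict_prefix u w \<and>
     (\<forall>y\<in>stree_explicit V r par lab. \<not> (strict_prefix u y \<and> strict_prefix y w))"

definition on_edge :: "'a list \<Rightarrow> 'a list \<Rightarrow> 'a list \<Rightarrow> bool" where
  "on_edge u w x \<longleftrightarrow> strict_prefix u x \<and> strict_prefix x w"

definition palindrome :: "'a list \<Rightarrow> bool" where
  "palindrome x \<longleftrightarrow> rev x = x"

end

theory Submission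
  imports Defs
begin

lemma depth_props:
  assumes "\<exists>k. (par ^^ k) v = r"
  shows "(par ^^ depth r par v) v = r" and "\<And>j. j < depth r par v \<Longrightarrow> (par ^^ j) v \<noteq> r"
  using assms unfolding depth_def by (auto intro: LeastI_ex dest: not_less_Least)

lemma fp: "(f ^^ i) ((f ^^ k) v) = (f ^^ (i + k)) v"
  by (simp add: funpow_add)

lemma depth_shift:
  assumes "\<exists>k. (par ^^ k) v = r" and "k \<le> depth r par v"
  shows "depth r par ((par ^^ k) v) = depth r par v - k"
proof -
  have a: "(par ^^ (depth r par v - k)) ((par ^^ k) v) = r"
    using depth_props(1)[OF assms(1)] assms(2) by (simp add: fp)
  have b: "(par ^^ j) ((par ^^ k) v) \<noteq> r" if "j < depth r par v - k" for j
    using depth_props(2)[OF assms(1), of "j + k"] that by (simp add: fp)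
  show ?thesis unfolding depth_def[of r par "(par ^^ k) v"]
    apply (rule Least_equality)
    using a b by (auto simp: not_less[symmetric])
qed

lemma suf_shift:
  assumes "\<exists>k. (par ^^ k) v = r" and "k \<le> depth r par v"
  shows "suf r par lab ((par ^^ k) v) = drop k (suf r par lab v)"
  unfolding suf_def depth_shift[OF assms]
  by (rule nth_equalityI) (auto simp: fp add.commute)

lemma len_suf: "length (suf r par lab v) = depth r par v"
  by (simp add: suf_def)

lemma in_V:
  assumes "trie V r par lab dollar" "v \<in> V - {r}" "k < depth r par v"
  shows "(par ^^ k) v \<in> V - {r}"
  using assms(3)
proof (induction k)
  case 0 then show ?case using assms(2) by simp
next
  case (Suc k)
  have ex: "\<exists>k. (par ^^ k) v = r" using assms(1,2) unfolding trie_def by blast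
  have "(par ^^ k) v \<in> V - {r}" using Suc by simp
  then have "par ((par ^^ k) v) \<in> V" using assms(1) unfolding trie_def by blast
  moreover have "(par ^^ Suc k) v \<noteq> r" using depth_props(2)[OF ex, of "Suc k"] Suc.prems by simp
  ultimately show ?case by simp
qed

lemma loci_prefix_closed:
  "z \<in> stree_loci V r par lab \<Longrightarrow> prefix z' z \<Longrightarrow> z' \<in> stree_loci V r par lab"
  unfolding stree_loci_def using prefix_order.trans[of z' z] by auto

lemma main_dir:
  fixes V :: "'v set" and r :: 'v and par :: "'v \<Rightarrow> 'v" and lab :: "'v \<Rightarrow> 'a" and dollar :: 'a
  assumes tr: "trie V r par lab dollar"
    and ed: "stree_edge V r par lab u w"
    and xi: "x \<in> stree_implicit V r par lab" and xe: "on_edge u w x" and xp: "palindrome x"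
    and yi: "y \<in> stree_implicit V r par lab" and ye: "on_edge u w y" and yp: "palindrome y"
    and xy: "prefix x y"
  shows "x = y"
proof (rule ccontr)
  assume ne: "x \<noteq> y"
  let ?L = "stree_loci V r par lab"
  let ?E = "stree_explicit V r par lab"
  have wE: "w \<in> ?E" and uw: "\<And>m. m \<in> ?E \<Longrightarrow> strict_prefix u m \<Longrightarrow> strict_prefix m w \<Longrightarrow> False"
    using ed unfolding stree_edge_def by blast+
  have wL: "w \<in> ?L" using wE unfolding stree_explicit_def by blast
  have ux: "strict_prefix u x" and xw: "strict_prefix x w" using xe unfolding on_edge_def by auto
  have xnE: "x \<notin> ?E" using xi unfolding stree_implicit_def by blast
  have comp: "prefix z w \<or> prefix w z" if zL: "z \<in> ?L" and xz: "prefix x z" for z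
  proof (rule ccontr)
    assume "\<not> (prefix z w \<or> prefix w z)"
    then have "z \<parallel> w" unfolding parallel_def by simp
    then obtain as b bs c cs where bc: "b \<noteq> c" and z: "z = as @ b # bs" and w: "w = as @ c # cs"
      using parallel_decomp[of z w] by auto
    have xas: "prefix x as"
    proof -
      have "prefix x as \<or> prefix as x" using xz z prefix_same_cases[of x z as] by auto
      moreover have "\<not> strict_prefix as x"
      proof
        assume "strict_prefix as x"
        then obtain t where xt: "x = as @ t" and tne: "t \<noteq> []"
          by (auto simp: strict_prefix_def prefix_def)
        then have "prefix (as @ [hd t]) x" by (cases t) auto
        then have "prefix (as @ [hd t]) z" "prefix (as @ [hd t]) w"
          using prefix_order.trans[OF _ xz] prefix_order.trans[OF _ prefix_order.less_imp_le[OF xw]] by auto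
        then show False using bc z w by auto
      qed
      ultimately show ?thesis by auto
    qed
    have "as @ [b] \<in> ?L" using loci_prefix_closed[OF zL] z by simp
    moreover have "as @ [c] \<in> ?L" using loci_prefix_closed[OF wL] w by simp
    moreover have "as \<in> ?L" using loci_prefix_closed[OF wL] w by simp
    ultimately have "as \<in> ?E" using bc unfolding stree_explicit_def by (intro CollectI conjI disjI2 exI[of _ b] exI[of _ c]) auto
    moreover have "strict_prefix u as" using prefix_order.less_le_trans[OF ux xas] .
    moreover have "strict_prefix as w" using w by (simp add: strict_prefix_def)
    ultimately show False using uw by blast
  qed
  \<comment> \<open>every occurrence of x is an occurrence of y\<close>
  have occ: "prefix y (suf r par lab v)" if v: "v \<in> V - {r}" and xv: "prefix x (suf r par lab v)" for v
  proof -
    have sL: "suf r par lab v \<in> ?L" using v unfolding stree_loci_def by blast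
    then have sE: "suf r par lab v \<in> ?E" using v unfolding stree_explicit_def by blast
    have "x \<noteq> suf r par lab v" using sE xnE by blast
    then have xs: "strict_prefix x (suf r par lab v)" using xv by simp
    have "prefix w (suf r par lab v)"
    proof -
      have "prefix (suf r par lab v) w \<or> prefix w (suf r par lab v)" using comp[OF sL xv] .
      moreover have "\<not> strict_prefix (suf r par lab v) w"
        using uw[OF sE prefix_order.less_trans[OF ux xs]] by blast
      ultimately show ?thesis by auto
    qed
    moreover have "prefix y w" using ye unfolding on_edge_def by auto
    ultimately show ?thesis by (rule prefix_order.trans[rotated])
  qed
  obtain q where yq: "y = x @ q" using xy prefix_def by blast
  have qne: "q \<noteq> []" using ne yq by simp
  have "rev y = y" "rev x = x" using xp yp unfolding palindrome_def by auto
  then have yp': "y = rev q @ x" using yq by (metis rev_append rev_rev_ident)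
  define p where "p = rev q"
  have pne: "p \<noteq> []" using qne p_def by simp
  have noocc: "\<forall>v. v \<in> V - {r} \<and> depth r par v = n \<longrightarrow> \<not> prefix y (suf r par lab v)" for n
  proof (induction n rule: less_induct)
    case (less n)
    show ?case
    proof (intro allI impI notI)
      fix v assume v: "v \<in> V - {r} \<and> depth r par v = n" and py: "prefix y (suf r par lab v)"
      have ex: "\<exists>k. (par ^^ k) v = r" using tr v unfolding trie_def by blast
      have "length y \<le> depth r par v" using prefix_length_le[OF py] by (simp add: suf_def)
      moreover have "x \<noteq> []" using ux by auto
      ultimately have lp: "length p < depth r par v" using yp' p_def
        by (simp add: less_le_trans[of _ "length q + length x"])
      define v' where "v' = (par ^^ length p) v"
      have v'V: "v' \<in> V - {r}" using in_V[OF tr _ lp] v v'_def by blast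
      have sv': "suf r par lab v' = drop (length p) (suf r par lab v)"
        using suf_shift[OF ex, of "length p"] lp v'_def by simp
      obtain s where "suf r par lab v = y @ s" using py prefix_def by blast
      then have "prefix x (suf r par lab v')" using yp' p_def sv' by simp
      then have "prefix y (suf r par lab v')" using occ[OF v'V] by simp
      moreover have "depth r par v' < n" using depth_shift[OF ex, of "length p"] lp v'_def v pne by simp
      ultimately show False using less.IH[of "depth r par v'"] v'V by simp
    qed
  qed
  have "y \<in> ?L" using yi unfolding stree_implicit_def by blast
  then obtain v where "v \<in> V - {r}" "prefix y (suf r par lab v)" unfolding stree_loci_def by blast
  then show False using noocc[of "depth r par v"] by simp
qed

theorem lemma2:
  fixes V :: "'v set" and r :: 'v and par :: "'v \<Rightarrow> 'v" and lab :: "'v \<Rightarrow> 'a" and dollar :: 'a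
  assumes "trie V r par lab dollar"
    and "stree_edge V r par lab u w"
    and "x \<in> stree_implicit V r par lab" and "on_edge u w x" and "palindrome x"
    and "y \<in> stree_implicit V r par lab" and "on_edge u w y" and "palindrome y"
  shows "x = y"
proof -
  have "prefix x w" "prefix y w" using assms(4,7) unfolding on_edge_def by auto
  then have "prefix x y \<or> prefix y x" using prefix_same_cases by blast
  then show ?thesis
  proof
    assume "prefix x y" then show ?thesis using main_dir[OF assms] by blast
  next
    assume "prefix y x" then show ?thesis using main_dir[OF assms(1,2,6,7,8,3,4,5)] by blast
  qed
qed

end
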